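(* On $\mathbb{C}^2\otimes\mathbb{C}^2$ let $|\Phi^\pm\rangle=(|00\rangle\pm|11\rangle)/\sqrt2$, and for $\alpha,\beta\in(0,1)$ let $\sigma_1=\alpha|\Phi^+\rangle\langle\Phi^+|+(1-\alpha)|01\rangle\langle01|$ and $\sigma_2=\beta|\Phi^-\rangle\langle\Phi^-|+(1-\beta)|10\rangle\langle10|$, with supports $s_1=\mathrm{span}\{|\Phi^+\rangle,|01\rangle\}$ and $s_2=\mathrm{span}\{|\Phi^-\rangle,|10\rangle\}$. Then any two unit vectors $|\psi_1\rangle\in s_1$, $|\psi_2\rangle\in s_2$ are perfectly distinguishable by LOCC, but $\{\sigma_1,\sigma_2\}$ is not perfectly distinguishable by LOCC (indeed not even by any separable POVM).
   Context: The two parties hold the two qubits. A set of states is perfectly distinguishable by LOCC if there is an LOCC protocol identifying the state with probability $1$; equivalently there is an LOCC-implementable POVM $\{\Pi_i\}$ with $\mathrm{Tr}(\Pi_i\sigma_j)=\delta_{ij}$. A separable POVM is one whose elements are nonnegative combinations of tensor products of positive semidefinite operators on the two qubits. The support of a density matrix is the span of its eigenvectors with nonzero eigenvalues. *)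

theory Defs
  imports "Jordan_Normal_Form.Matrix" "Jordan_Normal_Form.Schur_Decomposition"
          "HOL-Library.Complex_Order"
begin

text \<open>Two qubits: C^2 (x) C^2 = C^4 with basis |00>,|01>,|10>,|11> = indices 0,1,2,3;
  the first tensor factor (Alice) is index div 2, the second (Bob) is index mod 2.\<close>

definition tensor2 :: "complex mat \<Rightarrow> complex mat \<Rightarrow> complex mat" where
  "tensor2 A B = mat 4 4 (\<lambda>(i,j). A $$ (i div 2, j div 2) * B $$ (i mod 2, j mod 2))"

definition msum :: "nat \<Rightarrow> complex mat list \<Rightarrow> complex mat" where
  "msum n xs = foldr (+) xs (0\<^sub>m n n)"

definition mtrace :: "complex mat \<Rightarrow> complex" where
  "mtrace A = (\<Sum>i<dim_row A. A $$ (i,i))"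

definition psd :: "nat \<Rightarrow> complex mat \<Rightarrow> bool" where
  "psd n A \<longleftrightarrow> A \<in> carrier_mat n n \<and>
     (\<forall>v \<in> carrier_vec n. 0 \<le> conjugate v \<bullet> (A *\<^sub>v v))"

definition ket :: "nat \<Rightarrow> complex vec" where
  "ket i = unit_vec 4 i"

definition proj :: "complex vec \<Rightarrow> complex mat" where
  "proj v = mat 4 4 (\<lambda>(i,j). v $ i * cnj (v $ j))"

definition unit_state :: "complex vec \<Rightarrow> bool" where
  "unit_state v \<longleftrightarrow> v \<in> carrier_vec 4 \<and> (\<Sum>i<4. (cmod (v $ i))\<^sup>2) = 1"

definition phi_plus :: "complex vec" where
  "phi_plus = complex_of_real (1 / sqrt 2) \<cdot>\<^sub>v (ket 0 + ket 3)"

definition phi_minus :: "complex vec" where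
  "phi_minus = complex_of_real (1 / sqrt 2) \<cdot>\<^sub>v (ket 0 - ket 3)"

definition sigma1 :: "real \<Rightarrow> complex mat" where
  "sigma1 \<alpha> = complex_of_real \<alpha> \<cdot>\<^sub>m proj phi_plus + complex_of_real (1 - \<alpha>) \<cdot>\<^sub>m proj (ket 1)"

definition sigma2 :: "real \<Rightarrow> complex mat" where
  "sigma2 \<beta> = complex_of_real \<beta> \<cdot>\<^sub>m proj phi_minus + complex_of_real (1 - \<beta>) \<cdot>\<^sub>m proj (ket 2)"

definition s1 :: "complex vec set" where
  "s1 = {a \<cdot>\<^sub>v phi_plus + b \<cdot>\<^sub>v ket 1 | a b. True}"

definition s2 :: "complex vec set" where
  "s2 = {a \<cdot>\<^sub>v phi_minus + b \<cdot>\<^sub>v ket 2 | a b. True}"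

text \<open>Finite-round LOCC protocols, described by their leaves: each leaf is a pair
  (K, l) of the accumulated (product) Kraus operator K of the branch and the
  announced guess l.\<close>

inductive locc_tree :: "(complex mat \<times> nat) list \<Rightarrow> bool" where
  stop: "locc_tree [(1\<^sub>m 4, l)]"
| alice: "\<lbrakk> \<forall>A \<in> set As. A \<in> carrier_mat 2 2;
           msum 2 (map (\<lambda>A. mat_adjoint A * A) As) = 1\<^sub>m 2;
           length Ls = length As; \<forall>L \<in> set Ls. locc_tree L \<rbrakk>
         \<Longrightarrow> locc_tree (concat (map (\<lambda>(A, L). map (\<lambda>(K, l). (K * tensor2 A (1\<^sub>m 2), l)) L)
                                   (zip As Ls)))"
| bob: "\<lbrakk> \<forall>B \<in> set Bs. B \<in> carrier_mat 2 2;
           msum 2 (map (\<lambda>B. mat_adjoint B * B) Bs) = 1\<^sub>m 2;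
           length Ls = length Bs; \<forall>L \<in> set Ls. locc_tree L \<rbrakk>
         \<Longrightarrow> locc_tree (concat (map (\<lambda>(B, L). map (\<lambda>(K, l). (K * tensor2 (1\<^sub>m 2) B, l)) L)
                                   (zip Bs Ls)))"

definition povm_elem :: "(complex mat \<times> nat) list \<Rightarrow> nat \<Rightarrow> complex mat" where
  "povm_elem L i = msum 4 (map (\<lambda>(K, l). mat_adjoint K * K) (filter (\<lambda>(K, l). l = i) L))"

definition locc_distinguishable :: "complex mat list \<Rightarrow> bool" where
  "locc_distinguishable \<rho>s \<longleftrightarrow> (\<exists>L. locc_tree L \<and> (\<forall>(K, l) \<in> set L. l < length \<rho>s) \<and>
     (\<forall>i < length \<rho>s. \<forall>j < length \<rho>s.
        mtrace (povm_elem L i * \<rho>s ! j) = (if i = j then 1 else 0)))"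

definition separable_op :: "complex mat \<Rightarrow> bool" where
  "separable_op P \<longleftrightarrow> (\<exists>cs :: (real \<times> complex mat \<times> complex mat) list.
     (\<forall>(c, A, B) \<in> set cs. c \<ge> 0 \<and> psd 2 A \<and> psd 2 B) \<and>
     P = msum 4 (map (\<lambda>(c, A, B). complex_of_real c \<cdot>\<^sub>m tensor2 A B) cs))"

definition sep_distinguishable :: "complex mat list \<Rightarrow> bool" where
  "sep_distinguishable \<rho>s \<longleftrightarrow> (\<exists>Pm :: nat \<Rightarrow> complex mat.
     (\<forall>i < length \<rho>s. separable_op (Pm i)) \<and>
     msum 4 (map Pm [0..<length \<rho>s]) = 1\<^sub>m 4 \<and>
     (\<forall>i < length \<rho>s. \<forall>j < length \<rho>s.
        mtrace (Pm i * \<rho>s ! j) = (if i = j then 1 else 0)))"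

end

theory Submission
  imports Defs
begin


lemma sum4: "(\<Sum>i<4. f i) = f (0::nat) + f 1 + f 2 + (f 3 :: 'a::comm_monoid_add)"
  by (simp add: eval_nat_numeral add.assoc)
lemma sum2: "(\<Sum>i<2. f i) = f (0::nat) + (f 1 :: 'a::comm_monoid_add)"
  by (simp add: eval_nat_numeral)
lemma sum4': "(\<Sum>i=0..<4. f i) = f (0::nat) + f 1 + f 2 + (f 3 :: 'a::comm_monoid_add)"
  by (simp add: eval_nat_numeral add.assoc atLeast0LessThan)
lemma sum2': "(\<Sum>i=0..<2. f i) = f (0::nat) + (f 1 :: 'a::comm_monoid_add)"
  by (simp add: eval_nat_numeral atLeast0LessThan)
lemma less4: "(i::nat) < 4 \<longleftrightarrow> i = 0 \<or> i = 1 \<or> i = 2 \<or> i = 3" by auto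
lemma less2: "(i::nat) < 2 \<longleftrightarrow> i = 0 \<or> i = 1" by auto

lemma adj_dim[simp]: "dim_row (mat_adjoint A) = dim_col A" "dim_col (mat_adjoint A) = dim_row A"
  by (auto simp: mat_adjoint_def)
lemma adj_index[simp]: "i < dim_col A \<Longrightarrow> j < dim_row A \<Longrightarrow> mat_adjoint A $$ (i,j) = cnj (A $$ (j,i))"
  by (simp add: mat_adjoint_def mat_of_rows_def)
lemma adj_carrier[simp]: "A \<in> carrier_mat n m \<Longrightarrow> mat_adjoint A \<in> carrier_mat m n"
  by auto

lemma tensor2_carrier[simp]: "tensor2 A B \<in> carrier_mat 4 4" by (simp add: tensor2_def)
lemma tensor2_dim[simp]: "dim_row (tensor2 A B) = 4" "dim_col (tensor2 A B) = 4" by (simp_all add: tensor2_def)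
lemma tensor2_index: "i < 4 \<Longrightarrow> j < 4 \<Longrightarrow> tensor2 A B $$ (i,j) = A $$ (i div 2, j div 2) * B $$ (i mod 2, j mod 2)"
  by (simp add: tensor2_def)

lemma tensor2_mult: assumes "A \<in> carrier_mat 2 2" "B \<in> carrier_mat 2 2" "C \<in> carrier_mat 2 2" "D \<in> carrier_mat 2 2"
  shows "tensor2 A B * tensor2 C D = tensor2 (A * C) (B * D)"
proof (rule eq_matI)
  fix i j assume ij: "i < dim_row (tensor2 (A * C) (B * D))" "j < dim_col (tensor2 (A * C) (B * D))"
  then have "i < 4" "j < 4" by auto
  then show "(tensor2 A B * tensor2 C D) $$ (i, j) = tensor2 (A * C) (B * D) $$ (i, j)"
    using assms unfolding less4
    by (auto simp: tensor2_index index_mult_mat scalar_prod_def sum4' sum2' algebra_simps)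
qed auto

lemma tensor2_adj: assumes "A \<in> carrier_mat 2 2" "B \<in> carrier_mat 2 2"
  shows "mat_adjoint (tensor2 A B) = tensor2 (mat_adjoint A) (mat_adjoint B)"
proof (rule eq_matI)
  fix i j assume ij: "i < dim_row (tensor2 (mat_adjoint A) (mat_adjoint B))" "j < dim_col (tensor2 (mat_adjoint A) (mat_adjoint B))"
  then have "i < 4" "j < 4" by auto
  then show "mat_adjoint (tensor2 A B) $$ (i, j) = tensor2 (mat_adjoint A) (mat_adjoint B) $$ (i, j)"
    using assms unfolding less4
    by (auto simp: tensor2_index)
qed auto

lemma tensor2_add_left: assumes "A \<in> carrier_mat 2 2" "B \<in> carrier_mat 2 2"
  shows "tensor2 (A + B) C = tensor2 A C + tensor2 B C"
  by (rule eq_matI) (use assms in \<open>auto simp: tensor2_index algebra_simps\<close>)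

lemma tensor2_zero_left: "tensor2 (0\<^sub>m 2 2) C = 0\<^sub>m 4 4"
  by (rule eq_matI) (auto simp: tensor2_index)

lemma tensor2_one: "tensor2 (1\<^sub>m 2) (1\<^sub>m 2) = 1\<^sub>m 4"
  by (rule eq_matI) (auto simp: tensor2_index less4)

lemma tensor2_add_right: assumes "A \<in> carrier_mat 2 2" "B \<in> carrier_mat 2 2"
  shows "tensor2 C (A + B) = tensor2 C A + tensor2 C B"
  by (rule eq_matI) (use assms in \<open>auto simp: tensor2_index algebra_simps\<close>)

lemma tensor2_zero_right: "tensor2 C (0\<^sub>m 2 2) = 0\<^sub>m 4 4"
  by (rule eq_matI) (auto simp: tensor2_index)

lemma adj_mult: fixes A B :: "complex mat" assumes "A \<in> carrier_mat n m" "B \<in> carrier_mat m k"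
  shows "mat_adjoint (A * B) = mat_adjoint B * mat_adjoint A"
proof (rule eq_matI)
  fix i j assume ij: "i < dim_row (mat_adjoint B * mat_adjoint A)" "j < dim_col (mat_adjoint B * mat_adjoint A)"
  then have i: "i < k" and j: "j < n" using assms by auto
  have "mat_adjoint (A * B) $$ (i, j) = cnj ((A * B) $$ (j, i))" using i j assms by simp
  also have "\<dots> = (\<Sum>ia = 0..<m. cnj (A $$ (j, ia)) * cnj (B $$ (ia, i)))"
    using i j assms by (simp add: index_mult_mat scalar_prod_def)
  also have "\<dots> = (\<Sum>ia = 0..<m. mat_adjoint B $$ (i, ia) * mat_adjoint A $$ (ia, j))"
    using i j assms by (intro sum.cong) auto
  also have "\<dots> = (mat_adjoint B * mat_adjoint A) $$ (i, j)"
    using i j assms by (simp add: index_mult_mat scalar_prod_def)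
  finally show "mat_adjoint (A * B) $$ (i, j) = (mat_adjoint B * mat_adjoint A) $$ (i, j)" .
qed (use assms in auto)

lemma adj_mult_sq: fixes K T :: "complex mat" assumes "K \<in> carrier_mat 4 4" "T \<in> carrier_mat 4 4"
  shows "mat_adjoint (K * T) * (K * T) = mat_adjoint T * (mat_adjoint K * K) * T"
proof -
  have 1: "mat_adjoint T * (mat_adjoint K * K) * T = mat_adjoint T * ((mat_adjoint K * K) * T)"
    by (rule assoc_mult_mat) (use assms in auto)
  have 2: "(mat_adjoint K * K) * T = mat_adjoint K * (K * T)"
    by (rule assoc_mult_mat) (use assms in auto)
  have 3: "mat_adjoint T * mat_adjoint K * (K*T) = mat_adjoint T * (mat_adjoint K * (K*T))"
    by (rule assoc_mult_mat) (use assms in auto)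
  have "mat_adjoint (K * T) * (K * T) = mat_adjoint T * mat_adjoint K * (K*T)" using adj_mult[OF assms] by simp
  also have "\<dots> = mat_adjoint T * (mat_adjoint K * K) * T" using 1 2 3 by simp
  finally show ?thesis .
qed

lemma msum_Nil[simp]: "msum n [] = 0\<^sub>m n n" by (simp add: msum_def)
lemma msum_Cons[simp]: "msum n (x # xs) = x + msum n xs" by (simp add: msum_def)
lemma msum_carrier: "\<forall>x\<in>set xs. x \<in> carrier_mat n n \<Longrightarrow> msum n xs \<in> carrier_mat n n"
  by (induction xs) auto
lemma msum_append: "\<forall>x\<in>set xs. x \<in> carrier_mat n n \<Longrightarrow> \<forall>x\<in>set ys. x \<in> carrier_mat n n \<Longrightarrow>
   msum n (xs @ ys) = msum n xs + msum n ys"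
proof (induction xs)
  case Nil then show ?case using msum_carrier[of ys n] by simp
next
  case (Cons a xs) then show ?case using msum_carrier[of ys n] msum_carrier[of xs n]
      assoc_add_mat[of a n n "msum n xs" "msum n ys"] by simp
qed

lemma msum_conj: assumes "T \<in> carrier_mat n n" "\<forall>x\<in>set xs. f x \<in> carrier_mat n n"
  shows "msum n (map (\<lambda>x. mat_adjoint T * f x * T) xs) = mat_adjoint T * msum n (map f xs) * T"
  using assms(2)
proof (induction xs)
  case Nil then show ?case using assms(1) by simp
next
  case (Cons a xs)
  have c: "msum n (map f xs) \<in> carrier_mat n n" using Cons by (intro msum_carrier) auto
  have "mat_adjoint T * (f a + msum n (map f xs)) * T = (mat_adjoint T * f a + mat_adjoint T * msum n (map f xs)) * T"
    using c Cons assms(1) by (subst mult_add_distrib_mat[of _ n n]) auto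
  also have "\<dots> = mat_adjoint T * f a * T + mat_adjoint T * msum n (map f xs) * T"
    using c Cons assms(1) by (subst add_mult_distrib_mat[of _ n n]) auto
  finally show ?case using Cons by simp
qed

lemma msum_tensor_left: "\<forall>x\<in>set xs. f x \<in> carrier_mat 2 2 \<Longrightarrow>
  msum 4 (map (\<lambda>x. tensor2 (f x) C) xs) = tensor2 (msum 2 (map f xs)) C"
proof (induction xs)
  case Nil then show ?case by (simp add: tensor2_zero_left)
next
  case (Cons a xs) then show ?case using msum_carrier[of "map f xs" 2]
    by (simp add: tensor2_add_left)
qed

lemma msum_tensor_right: "\<forall>x\<in>set xs. f x \<in> carrier_mat 2 2 \<Longrightarrow>
  msum 4 (map (\<lambda>x. tensor2 C (f x)) xs) = tensor2 C (msum 2 (map f xs))"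
proof (induction xs)
  case Nil then show ?case by (simp add: tensor2_zero_right)
next
  case (Cons a xs) then show ?case using msum_carrier[of "map f xs" 2]
    by (simp add: tensor2_add_right)
qed

definition gK :: "complex mat \<times> nat \<Rightarrow> complex mat" where
  "gK = (\<lambda>(K, l). mat_adjoint K * K)"

lemma concat_msum:
  assumes "length As = length Ls"
    "\<forall>L\<in>set Ls. (\<forall>(K,l)\<in>set L. K \<in> carrier_mat 4 4) \<and> msum 4 (map gK L) = 1\<^sub>m 4"
    "\<forall>A\<in>set As. T A \<in> carrier_mat 4 4"
  shows "msum 4 (map gK (concat (map (\<lambda>(A, L). map (\<lambda>(K, l). (K * T A, l)) L) (zip As Ls))))
       = msum 4 (map (\<lambda>A. mat_adjoint (T A) * T A) As)"
  using assms
proof (induction As Ls rule: list_induct2)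
  case Nil then show ?case by simp
next
  case (Cons A As L Ls)
  have TA: "T A \<in> carrier_mat 4 4" using Cons by auto
  have LK: "\<forall>(K,l)\<in>set L. K \<in> carrier_mat 4 4" and L1: "msum 4 (map gK L) = 1\<^sub>m 4" using Cons by auto
  have m: "map gK (map (\<lambda>(K, l). (K * T A, l)) L) = map (\<lambda>x. mat_adjoint (T A) * gK x * T A) L"
    using LK TA by (auto simp: gK_def adj_mult_sq)
  have e1: "msum 4 (map gK (map (\<lambda>(K, l). (K * T A, l)) L)) = mat_adjoint (T A) * T A"
  proof -
    have "msum 4 (map gK (map (\<lambda>(K, l). (K * T A, l)) L)) = msum 4 (map (\<lambda>x. mat_adjoint (T A) * gK x * T A) L)"
      by (simp only: m)
    also have "\<dots> = mat_adjoint (T A) * msum 4 (map gK L) * T A"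
      by (rule msum_conj[OF TA]) (use LK in \<open>auto simp: gK_def intro!: mult_carrier_mat[of _ 4 4 _ 4] adj_carrier[of _ 4 4]\<close>)
    also have "\<dots> = mat_adjoint (T A) * T A" using L1 TA by simp
    finally show ?thesis .
  qed
  have c1: "\<forall>x\<in>set (map gK (map (\<lambda>(K, l). (K * T A, l)) L)). x \<in> carrier_mat 4 4"
    using LK TA by (auto simp: gK_def)
  have c2: "\<forall>x\<in>set (map gK (concat (map (\<lambda>(A, L). map (\<lambda>(K, l). (K * T A, l)) L) (zip As Ls)))). x \<in> carrier_mat 4 4"
  proof
    fix x assume "x \<in> set (map gK (concat (map (\<lambda>(A, L). map (\<lambda>(K, l). (K * T A, l)) L) (zip As Ls))))"
    then obtain A' L' K l where z: "(A', L') \<in> set (zip As Ls)" and kl: "(K, l) \<in> set L'" and x: "x = gK (K * T A', l)"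
      by auto
    have "A' \<in> set As" "L' \<in> set Ls" using z by (auto dest: set_zip_leftD set_zip_rightD)
    then have "T A' \<in> carrier_mat 4 4" "K \<in> carrier_mat 4 4" using Cons(3,4) kl by auto
    then show "x \<in> carrier_mat 4 4" unfolding x gK_def by auto
  qed
  let ?F = "\<lambda>(A, L). map (\<lambda>(K, l). (K * T A, l)) L"
  have eq: "concat (map ?F (zip (A#As) (L#Ls))) = map (\<lambda>(K,l). (K * T A, l)) L @ concat (map ?F (zip As Ls))"
    by simp
  have "msum 4 (map gK (concat (map ?F (zip (A#As) (L#Ls)))))
     = msum 4 (map gK (map (\<lambda>(K,l). (K * T A, l)) L) @ map gK (concat (map ?F (zip As Ls))))"
    by (simp only: eq map_append)
  also have "\<dots> = mat_adjoint (T A) * T A + msum 4 (map (\<lambda>A. mat_adjoint (T A) * T A) As)"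
  proof -
    have IH: "msum 4 (map gK (concat (map ?F (zip As Ls)))) = msum 4 (map (\<lambda>A. mat_adjoint (T A) * T A) As)"
      using Cons(2-4) by simp
    show ?thesis unfolding msum_append[OF c1 c2] e1 IH ..
  qed
  finally show ?case by simp
qed



lemma adj_one[simp]: "mat_adjoint (1\<^sub>m n :: complex mat) = 1\<^sub>m n"
  by (rule eq_matI) auto

definition prodform :: "complex mat \<Rightarrow> bool" where
  "prodform K \<longleftrightarrow> (\<exists>X Y. X \<in> carrier_mat 2 2 \<and> Y \<in> carrier_mat 2 2 \<and> K = tensor2 X Y)"

lemma prodform_alice: assumes "prodform K" "A \<in> carrier_mat 2 2"
  shows "prodform (K * tensor2 A (1\<^sub>m 2))"
proof -
  obtain X Y where X: "X \<in> carrier_mat 2 2" and Y: "Y \<in> carrier_mat 2 2" and K: "K = tensor2 X Y"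
    using assms(1) unfolding prodform_def by blast
  have "K * tensor2 A (1\<^sub>m 2) = tensor2 (X * A) (Y * 1\<^sub>m 2)" unfolding K
    using X Y assms(2) by (simp add: tensor2_mult)
  moreover have "X * A \<in> carrier_mat 2 2" "Y * 1\<^sub>m 2 \<in> carrier_mat 2 2" using X Y assms(2) by auto
  ultimately show ?thesis unfolding prodform_def by blast
qed

lemma prodform_bob: assumes "prodform K" "A \<in> carrier_mat 2 2"
  shows "prodform (K * tensor2 (1\<^sub>m 2) A)"
proof -
  obtain X Y where X: "X \<in> carrier_mat 2 2" and Y: "Y \<in> carrier_mat 2 2" and K: "K = tensor2 X Y"
    using assms(1) unfolding prodform_def by blast
  have "K * tensor2 (1\<^sub>m 2) A = tensor2 (X * 1\<^sub>m 2) (Y * A)" unfolding K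
    using X Y assms(2) by (simp add: tensor2_mult)
  moreover have "Y * A \<in> carrier_mat 2 2" "X * 1\<^sub>m 2 \<in> carrier_mat 2 2" using X Y assms(2) by auto
  ultimately show ?thesis unfolding prodform_def by blast
qed

lemma alice_sum: assumes "\<forall>A\<in>set As. A \<in> carrier_mat 2 2" "msum 2 (map (\<lambda>A. mat_adjoint A * A) As) = 1\<^sub>m 2"
  shows "msum 4 (map (\<lambda>A. mat_adjoint (tensor2 A (1\<^sub>m 2)) * tensor2 A (1\<^sub>m 2)) As) = 1\<^sub>m 4"
proof -
  have "map (\<lambda>A. mat_adjoint (tensor2 A (1\<^sub>m 2)) * tensor2 A (1\<^sub>m 2)) As
      = map (\<lambda>A. tensor2 (mat_adjoint A * A) (1\<^sub>m 2)) As"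
    using assms(1) by (auto simp: tensor2_adj tensor2_mult)
  then have "msum 4 (map (\<lambda>A. mat_adjoint (tensor2 A (1\<^sub>m 2)) * tensor2 A (1\<^sub>m 2)) As)
     = msum 4 (map (\<lambda>A. tensor2 (mat_adjoint A * A) (1\<^sub>m 2)) As)" by (simp only:)
  also have "\<dots> = tensor2 (msum 2 (map (\<lambda>A. mat_adjoint A * A) As)) (1\<^sub>m 2)"
    using assms by (intro msum_tensor_left) (auto intro!: mult_carrier_mat[of _ 2 2 _ 2] adj_carrier[of _ 2 2])
  finally show ?thesis using assms(2) by (simp add: tensor2_one)
qed

lemma bob_sum: assumes "\<forall>A\<in>set As. A \<in> carrier_mat 2 2" "msum 2 (map (\<lambda>A. mat_adjoint A * A) As) = 1\<^sub>m 2"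
  shows "msum 4 (map (\<lambda>A. mat_adjoint (tensor2 (1\<^sub>m 2) A) * tensor2 (1\<^sub>m 2) A) As) = 1\<^sub>m 4"
proof -
  have "map (\<lambda>A. mat_adjoint (tensor2 (1\<^sub>m 2) A) * tensor2 (1\<^sub>m 2) A) As
      = map (\<lambda>A. tensor2 (1\<^sub>m 2) (mat_adjoint A * A)) As"
    using assms(1) by (auto simp: tensor2_adj tensor2_mult)
  then have "msum 4 (map (\<lambda>A. mat_adjoint (tensor2 (1\<^sub>m 2) A) * tensor2 (1\<^sub>m 2) A) As)
     = msum 4 (map (\<lambda>A. tensor2 (1\<^sub>m 2) (mat_adjoint A * A)) As)" by (simp only:)
  also have "\<dots> = tensor2 (1\<^sub>m 2) (msum 2 (map (\<lambda>A. mat_adjoint A * A) As))"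
    using assms by (intro msum_tensor_right) (auto intro!: mult_carrier_mat[of _ 2 2 _ 2] adj_carrier[of _ 2 2])
  finally show ?thesis using assms(2) by (simp add: tensor2_one)
qed

lemma tree_props: "locc_tree L \<Longrightarrow> msum 4 (map gK L) = 1\<^sub>m 4 \<and> (\<forall>(K,l)\<in>set L. prodform K)"
proof (induction rule: locc_tree.induct)
  case (stop l)
  have "prodform (1\<^sub>m 4)" unfolding prodform_def using tensor2_one by (metis one_carrier_mat)
  then show ?case by (auto simp: gK_def)
next
  case (alice As Ls)
  have c: "\<forall>L\<in>set Ls. (\<forall>(K,l)\<in>set L. K \<in> carrier_mat 4 4) \<and> msum 4 (map gK L) = 1\<^sub>m 4"
    using alice(4) by (fastforce simp: prodform_def)
  have 1: "msum 4 (map gK (concat (map (\<lambda>(A, L). map (\<lambda>(K, l). (K * tensor2 A (1\<^sub>m 2), l)) L) (zip As Ls)))) = 1\<^sub>m 4"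
    using concat_msum[OF alice(3)[symmetric] c, of "\<lambda>A. tensor2 A (1\<^sub>m 2)"] alice_sum[OF alice(1,2)] by simp
  have 2: "\<forall>(K,l)\<in>set (concat (map (\<lambda>(A, L). map (\<lambda>(K, l). (K * tensor2 A (1\<^sub>m 2), l)) L) (zip As Ls))). prodform K"
  proof (clarify)
    fix K l assume "(K, l) \<in> set (concat (map (\<lambda>(A, L). map (\<lambda>(K, l). (K * tensor2 A (1\<^sub>m 2), l)) L) (zip As Ls)))"
    then obtain A' L' K' where z: "(A', L') \<in> set (zip As Ls)" and kl: "(K', l) \<in> set L'" and x: "K = K' * tensor2 A' (1\<^sub>m 2)"
      by auto
    have "A' \<in> set As" "L' \<in> set Ls" using z by (auto dest: set_zip_leftD set_zip_rightD)
    then have "A' \<in> carrier_mat 2 2" "prodform K'" using alice(1,4) kl by auto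
    then show "prodform K" unfolding x by (rule prodform_alice[rotated])
  qed
  show ?case using 1 2 by blast
next
  case (bob Bs Ls)
  have c: "\<forall>L\<in>set Ls. (\<forall>(K,l)\<in>set L. K \<in> carrier_mat 4 4) \<and> msum 4 (map gK L) = 1\<^sub>m 4"
    using bob(4) by (fastforce simp: prodform_def)
  have 1: "msum 4 (map gK (concat (map (\<lambda>(A, L). map (\<lambda>(K, l). (K * tensor2 (1\<^sub>m 2) A, l)) L) (zip Bs Ls)))) = 1\<^sub>m 4"
    using concat_msum[OF bob(3)[symmetric] c, of "\<lambda>A. tensor2 (1\<^sub>m 2) A"] bob_sum[OF bob(1,2)] by simp
  have 2: "\<forall>(K,l)\<in>set (concat (map (\<lambda>(A, L). map (\<lambda>(K, l). (K * tensor2 (1\<^sub>m 2) A, l)) L) (zip Bs Ls))). prodform K"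
  proof (clarify)
    fix K l assume "(K, l) \<in> set (concat (map (\<lambda>(A, L). map (\<lambda>(K, l). (K * tensor2 (1\<^sub>m 2) A, l)) L) (zip Bs Ls)))"
    then obtain A' L' K' where z: "(A', L') \<in> set (zip Bs Ls)" and kl: "(K', l) \<in> set L'" and x: "K = K' * tensor2 (1\<^sub>m 2) A'"
      by auto
    have "A' \<in> set Bs" "L' \<in> set Ls" using z by (auto dest: set_zip_leftD set_zip_rightD)
    then have "A' \<in> carrier_mat 2 2" "prodform K'" using bob(1,4) kl by auto
    then show "prodform K" unfolding x by (rule prodform_bob[rotated])
  qed
  show ?case using 1 2 by blast
qed



lemma sigma1_carrier[simp]: "sigma1 a \<in> carrier_mat 4 4"
  by (simp add: sigma1_def proj_def)
lemma sigma2_carrier[simp]: "sigma2 a \<in> carrier_mat 4 4"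
  by (simp add: sigma2_def proj_def)

lemma sigma_dims[simp]: "dim_row (sigma1 a) = 4" "dim_col (sigma1 a) = 4" "dim_row (sigma2 a) = 4" "dim_col (sigma2 a) = 4"
  by (simp_all add: sigma1_def sigma2_def proj_def)

lemma sq2[simp]: "complex_of_real (sqrt 2) * complex_of_real (sqrt 2) = 2"
proof -
  have "complex_of_real (sqrt 2) * complex_of_real (sqrt 2) = complex_of_real (sqrt 2 * sqrt 2)"
    by (simp only: of_real_mult)
  also have "sqrt 2 * sqrt 2 = (2::real)" by simp
  finally show ?thesis by simp
qed

lemma half: "complex_of_real (1 / sqrt 2) * complex_of_real (1 / sqrt 2) = 1/2"
  by (simp add: of_real_divide)

lemma sigma1_idx: "i < 4 \<Longrightarrow> j < 4 \<Longrightarrow> sigma1 a $$ (i,j) =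
  (if (i = 0 \<or> i = 3) \<and> (j = 0 \<or> j = 3) then of_real a / 2 else if i = 1 \<and> j = 1 then of_real (1 - a) else 0)"
  unfolding less4 by (auto simp: sigma1_def proj_def phi_plus_def ket_def half)

lemma sigma2_idx: "i < 4 \<Longrightarrow> j < 4 \<Longrightarrow> sigma2 a $$ (i,j) =
  (if (i = 0 \<or> i = 3) \<and> (j = 0 \<or> j = 3) then (if i = j then of_real a / 2 else - of_real a / 2)
   else if i = 2 \<and> j = 2 then of_real (1 - a) else 0)"
  unfolding less4 by (auto simp: sigma2_def proj_def phi_minus_def ket_def half)

lemma mtrace_mult4: assumes "T \<in> carrier_mat 4 4" "S \<in> carrier_mat 4 4"
  shows "mtrace (T * S) = (\<Sum>i<4. \<Sum>k<4. T $$ (i,k) * S $$ (k,i))"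
  using assms by (simp add: mtrace_def index_mult_mat scalar_prod_def atLeast0LessThan)

lemma tr_sigma1: assumes "A \<in> carrier_mat 2 2" "B \<in> carrier_mat 2 2"
  shows "mtrace (tensor2 A B * sigma1 a) = of_real a / 2 * (A$$(0,0)*B$$(0,0) + A$$(0,1)*B$$(0,1) + A$$(1,0)*B$$(1,0) + A$$(1,1)*B$$(1,1))
    + of_real (1 - a) * (A$$(0,0) * B$$(1,1))"
proof -
  have "mtrace (tensor2 A B * sigma1 a) = (\<Sum>i<4. \<Sum>k<4. tensor2 A B $$ (i,k) * sigma1 a $$ (k,i))"
    by (rule mtrace_mult4) auto
  also have "\<dots> = (\<Sum>i<4. \<Sum>k<4. (A $$ (i div 2, k div 2) * B $$ (i mod 2, k mod 2)) *
     (if (k = 0 \<or> k = 3) \<and> (i = 0 \<or> i = 3) then of_real a / 2 else if k = 1 \<and> i = 1 then of_real (1 - a) else 0))"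
    by (intro sum.cong refl) (simp add: tensor2_index sigma1_idx)
  also have "\<dots> = of_real a / 2 * (A$$(0,0)*B$$(0,0) + A$$(0,1)*B$$(0,1) + A$$(1,0)*B$$(1,0) + A$$(1,1)*B$$(1,1))
    + of_real (1 - a) * (A$$(0,0) * B$$(1,1))"
    by (simp add: sum4 ring_distribs mult_ac)
  finally show ?thesis .
qed

lemma tr_sigma2: assumes "A \<in> carrier_mat 2 2" "B \<in> carrier_mat 2 2"
  shows "mtrace (tensor2 A B * sigma2 a) = of_real a / 2 * (A$$(0,0)*B$$(0,0) - A$$(0,1)*B$$(0,1) - A$$(1,0)*B$$(1,0) + A$$(1,1)*B$$(1,1))
    + of_real (1 - a) * (A$$(1,1) * B$$(0,0))"
proof -
  have "mtrace (tensor2 A B * sigma2 a) = (\<Sum>i<4. \<Sum>k<4. tensor2 A B $$ (i,k) * sigma2 a $$ (k,i))"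
    by (rule mtrace_mult4) auto
  also have "\<dots> = (\<Sum>i<4. \<Sum>k<4. (A $$ (i div 2, k div 2) * B $$ (i mod 2, k mod 2)) *
     (if (k = 0 \<or> k = 3) \<and> (i = 0 \<or> i = 3) then (if k = i then of_real a / 2 else - of_real a / 2)
      else if k = 2 \<and> i = 2 then of_real (1 - a) else 0))"
    by (intro sum.cong refl) (simp add: tensor2_index sigma2_idx)
  also have "\<dots> = of_real a / 2 * (A$$(0,0)*B$$(0,0) - A$$(0,1)*B$$(0,1) - A$$(1,0)*B$$(1,0) + A$$(1,1)*B$$(1,1))
    + of_real (1 - a) * (A$$(1,1) * B$$(0,0))"
    by (simp add: sum4 ring_distribs mult_ac)
  finally show ?thesis .
qed



lemma quad2: assumes "A \<in> carrier_mat 2 2"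
  shows "conjugate (vec 2 (\<lambda>i. if i = 0 then x else y)) \<bullet> (A *\<^sub>v vec 2 (\<lambda>i. if i = 0 then x else y))
    = cnj x * (A$$(0,0) * x + A$$(0,1) * y) + cnj y * (A$$(1,0) * x + A$$(1,1) * y)"
  using assms by (simp add: scalar_prod_def mult_mat_vec_def sum2' atLeast0LessThan[symmetric])

lemma psd_quad: assumes "psd 2 A"
  shows "0 \<le> cnj x * (A$$(0,0) * x + A$$(0,1) * y) + cnj y * (A$$(1,0) * x + A$$(1,1) * y)"
proof -
  have A: "A \<in> carrier_mat 2 2" using assms by (simp add: psd_def)
  have "vec 2 (\<lambda>i. if i = 0 then x else y) \<in> carrier_vec 2" by simp
  then show ?thesis using assms quad2[OF A, of x y] unfolding psd_def by metis
qed

lemma psd2: assumes "psd 2 A"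
  shows "Im (A$$(0,0)) = 0" "Re (A$$(0,0)) \<ge> 0" "Im (A$$(1,1)) = 0" "Re (A$$(1,1)) \<ge> 0"
    "A$$(1,0) = cnj (A$$(0,1))" "(cmod (A$$(0,1)))\<^sup>2 \<le> Re (A$$(0,0)) * Re (A$$(1,1))"
proof -
  have q1: "0 \<le> A$$(0,0)" using psd_quad[OF assms, of 1 0] by simp
  have q2: "0 \<le> A$$(1,1)" using psd_quad[OF assms, of 0 1] by simp
  have q3: "0 \<le> A$$(0,0) + A$$(0,1) + (A$$(1,0) + A$$(1,1))" using psd_quad[OF assms, of 1 1] by simp
  have q4: "0 \<le> A$$(0,0) + A$$(0,1) * \<i> + (- \<i>) * (A$$(1,0) + A$$(1,1) * \<i>)" using psd_quad[OF assms, of 1 \<i>] by simp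
  show i1: "Im (A$$(0,0)) = 0" "Re (A$$(0,0)) \<ge> 0" using q1 by (auto simp: less_eq_complex_def)
  show i2: "Im (A$$(1,1)) = 0" "Re (A$$(1,1)) \<ge> 0" using q2 by (auto simp: less_eq_complex_def)
  show h: "A$$(1,0) = cnj (A$$(0,1))" using q3 q4 i1 i2 by (auto simp: less_eq_complex_def complex_eq_iff algebra_simps)
  define p where "p = Re (A$$(0,0))"
  define q where "q = Re (A$$(1,1))"
  define z where "z = A$$(0,1)"
  have A00: "A$$(0,0) = of_real p" using i1 by (simp add: p_def complex_eq_iff)
  have A11: "A$$(1,1) = of_real q" using i2 by (simp add: q_def complex_eq_iff)
  have pq: "p \<ge> 0" "q \<ge> 0" using i1 i2 by (auto simp: p_def q_def)
  have gen: "0 \<le> p * (Re x ^ 2 + Im x ^ 2) + 2 * Re (cnj x * z * y) + q * (Re y ^ 2 + Im y ^ 2)" for x y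
  proof -
    have "0 \<le> cnj x * (A$$(0,0) * x + A$$(0,1) * y) + cnj y * (A$$(1,0) * x + A$$(1,1) * y)"
      by (rule psd_quad[OF assms])
    then have "0 \<le> Re (cnj x * (of_real p * x + z * y) + cnj y * (cnj z * x + of_real q * y))"
      unfolding A00 A11 h z_def by (simp add: less_eq_complex_def)
    then show ?thesis by (simp add: algebra_simps power2_eq_square)
  qed
  have "(cmod z)\<^sup>2 \<le> p * q"
  proof (cases "q = 0")
    case False
    then have qp: "q > 0" using pq by auto
    have "0 \<le> p * (q ^ 2) + 2 * Re (of_real q * z * (- cnj z)) + q * (Re z ^ 2 + Im z ^ 2)"
      using gen[of "of_real q" "- cnj z"] by simp
    also have "\<dots> = q * (p * q - (cmod z)\<^sup>2)"
      using cmod_power2[of z] by (simp add: algebra_simps power2_eq_square)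
    finally have "0 \<le> p * q - (cmod z)\<^sup>2" using qp by (simp add: zero_le_mult_iff)
    then show ?thesis by simp
  next
    case True
    show ?thesis
    proof (rule ccontr)
      assume "\<not> ?thesis"
      then have zn: "(cmod z)\<^sup>2 > 0" using True by simp
      define t where "t = (p + 1) / (cmod z)\<^sup>2"
      have g: "0 \<le> p + 2 * Re (z * (- of_real t * cnj z))"
        using gen[of 1 "- of_real t * cnj z"] True by simp
      have e1: "Re (z * (- of_real t * cnj z)) = - t * (cmod z)\<^sup>2"
        using cmod_power2[of z] by (simp add: algebra_simps power2_eq_square)
      have e2: "t * (cmod z)\<^sup>2 = p + 1" using zn by (simp add: t_def)
      show False using g e1 e2 pq by simp
    qed
  qed
  then show "(cmod (A$$(0,1)))\<^sup>2 \<le> Re (A$$(0,0)) * Re (A$$(1,1))" by (simp add: z_def p_def q_def)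
qed

lemma AM: "4 * (a::real) * b \<le> (a + b)^2"
proof -
  have "(a + b)^2 - 4 * a * b = (a - b)^2" by (simp add: power2_eq_square algebra_simps)
  moreover have "0 \<le> (a - b)^2" by simp
  ultimately show ?thesis by linarith
qed

lemma core_real:
  fixes p q r s x y t :: real
  assumes "p \<ge> 0" "q \<ge> 0" "r \<ge> 0" "s \<ge> 0" "x \<ge> 0" "y \<ge> 0" "x^2 \<le> p * q" "y^2 \<le> r * s" "\<bar>t\<bar> \<le> x * y"
  shows "2 * \<bar>t\<bar> \<le> p * r + q * s"
proof -
  have "(2 * (x * y))^2 = 4 * x^2 * y^2" by (simp add: power2_eq_square)
  also have "\<dots> \<le> 4 * (p * q) * (r * s)" using assms by (intro mult_mono mult_left_mono) auto
  also have "\<dots> = 4 * (p * r) * (q * s)" by simp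
  also have "\<dots> \<le> (p * r + q * s)^2"
    using AM[of "p*r" "q*s"] by simp
  finally have sq: "(2 * (x * y))^2 \<le> (p * r + q * s)^2" .
  have nn: "0 \<le> p * r + q * s" using assms by simp
  have "2 * (x * y) \<le> p * r + q * s" by (rule power2_le_imp_le[OF sq nn])
  then show ?thesis using assms(9) by simp
qed



lemma real_zero1:
  fixes p q r s x y t a :: real
  assumes "p \<ge> 0" "q \<ge> 0" "r \<ge> 0" "s \<ge> 0" "x \<ge> 0" "y \<ge> 0" "x^2 \<le> p * q" "y^2 \<le> r * s" "\<bar>t\<bar> \<le> x * y"
    "0 < a" "a < 1" "a/2 * (p*r + q*s + 2*t) + (1 - a) * (p * s) = 0"
  shows "p * r = 0"
proof -
  have h: "2 * \<bar>t\<bar> \<le> p * r + q * s" by (rule core_real) (use assms in auto)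
  have X: "0 \<le> a/2 * (p*r + q*s + 2*t)" using h assms by (intro mult_nonneg_nonneg) auto
  have Y: "0 \<le> (1 - a) * (p * s)" using assms by (intro mult_nonneg_nonneg) auto
  have X0: "a/2 * (p*r + q*s + 2*t) = 0" and Y0: "(1 - a) * (p * s) = 0" using X Y assms(12) by linarith+
  have X1: "p*r + q*s + 2*t = 0" using X0 assms(10) by simp
  have "p * s = 0" using Y0 assms(11) by simp
  then consider "p = 0" | "s = 0" by auto
  then show ?thesis
  proof cases
    case 2
    then have "y^2 \<le> 0" using assms(8) by simp
    then have "y = 0" by simp
    then have "t = 0" using assms(9) by simp
    then show ?thesis using X1 2 by simp
  qed simp
qed

lemma real_zero2:
  fixes p q r s x y t a :: real
  assumes "p \<ge> 0" "q \<ge> 0" "r \<ge> 0" "s \<ge> 0" "x \<ge> 0" "y \<ge> 0" "x^2 \<le> p * q" "y^2 \<le> r * s" "\<bar>t\<bar> \<le> x * y"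
    "0 < a" "a < 1" "a/2 * (p*r + q*s - 2*t) + (1 - a) * (q * r) = 0"
  shows "p * r = 0"
proof -
  have h: "2 * \<bar>t\<bar> \<le> p * r + q * s" by (rule core_real) (use assms in auto)
  have X: "0 \<le> a/2 * (p*r + q*s - 2*t)" using h assms by (intro mult_nonneg_nonneg) auto
  have Y: "0 \<le> (1 - a) * (q * r)" using assms by (intro mult_nonneg_nonneg) auto
  have X0: "a/2 * (p*r + q*s - 2*t) = 0" and Y0: "(1 - a) * (q * r) = 0" using X Y assms(12) by linarith+
  have X1: "p*r + q*s - 2*t = 0" using X0 assms(10) by simp
  have "q * r = 0" using Y0 assms(11) by simp
  then consider "q = 0" | "r = 0" by auto
  then show ?thesis
  proof cases
    case 1
    then have "x^2 \<le> 0" using assms(7) by simp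
    then have "x = 0" by simp
    then have "t = 0" using assms(9) by simp
    then show ?thesis using X1 1 by simp
  qed simp
qed

lemma term_gen:
  assumes "psd 2 A" "psd 2 B"
  obtains p q r s z w where "p \<ge> 0" "q \<ge> 0" "r \<ge> 0" "s \<ge> 0"
    "A$$(0,0) = of_real p" "A$$(1,1) = of_real q" "A$$(0,1) = z" "A$$(1,0) = cnj z"
    "B$$(0,0) = of_real r" "B$$(1,1) = of_real s" "B$$(0,1) = w" "B$$(1,0) = cnj w"
    "(cmod z)^2 \<le> p * q" "(cmod w)^2 \<le> r * s" "\<bar>Re (z * w)\<bar> \<le> cmod z * cmod w"
proof -
  note a = psd2[OF assms(1)] and b = psd2[OF assms(2)]
  have "\<bar>Re (A$$(0,1) * B$$(0,1))\<bar> \<le> cmod (A$$(0,1)) * cmod (B$$(0,1))"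
    using abs_Re_le_cmod[of "A$$(0,1) * B$$(0,1)"] by (simp add: norm_mult)
  then show ?thesis using a b that[of "Re (A$$(0,0))" "Re (A$$(1,1))" "Re (B$$(0,0))" "Re (B$$(1,1))" "A$$(0,1)" "B$$(0,1)"]
    by (simp add: complex_eq_iff)
qed

lemma cnj_sum: "z * w + cnj z * cnj w = complex_of_real (2 * Re (z * w))"
  using complex_add_cnj[of "z*w"] by simp

lemma term1: assumes "psd 2 A" "psd 2 B" "0 < a" "a < 1"
  shows "\<exists>g\<ge>0. mtrace (tensor2 A B * sigma1 a) = of_real g \<and> (g = 0 \<longrightarrow> A$$(0,0) * B$$(0,0) = 0)"
proof -
  have AB: "A \<in> carrier_mat 2 2" "B \<in> carrier_mat 2 2" using assms by (auto simp: psd_def)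
  obtain p q r s z w where h: "p \<ge> 0" "q \<ge> 0" "r \<ge> 0" "s \<ge> 0"
    "A$$(0,0) = of_real p" "A$$(1,1) = of_real q" "A$$(0,1) = z" "A$$(1,0) = cnj z"
    "B$$(0,0) = of_real r" "B$$(1,1) = of_real s" "B$$(0,1) = w" "B$$(1,0) = cnj w"
    "(cmod z)^2 \<le> p * q" "(cmod w)^2 \<le> r * s" "\<bar>Re (z * w)\<bar> \<le> cmod z * cmod w"
    using term_gen[OF assms(1,2)] by blast
  define t where "t = Re (z * w)"
  have ht: "\<bar>t\<bar> \<le> cmod z * cmod w" using h(15) by (simp add: t_def)
  define g where "g = a/2 * (p*r + q*s + 2*t) + (1 - a) * (p * s)"
  have e: "of_real p * of_real r + z * w + cnj z * cnj w + of_real q * of_real s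
      = complex_of_real (p*r + q*s + 2 * t)"
    using cnj_sum[of z w] unfolding t_def by (simp add: algebra_simps)
  have tr: "mtrace (tensor2 A B * sigma1 a) = of_real g"
    unfolding tr_sigma1[OF AB] h g_def e by (simp add: algebra_simps)
  have "2 * \<bar>t\<bar> \<le> p * r + q * s" by (rule core_real[where x = "cmod z" and y = "cmod w"]) (use h ht in auto)
  then have "0 \<le> p*r + q*s + 2*t" by linarith
  then have g1: "0 \<le> a/2 * (p*r + q*s + 2*t)" using assms by simp
  have g2: "0 \<le> (1 - a) * (p * s)" using assms h by simp
  have g0: "g \<ge> 0" unfolding g_def using g1 g2 by linarith
  have "g = 0 \<longrightarrow> p * r = 0"
    using real_zero1[where x = "cmod z" and y = "cmod w" and t = t, of p q r s a] h ht assms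
    unfolding g_def by auto
  then show ?thesis using tr g0 h by (intro exI[of _ g]) auto
qed

lemma term2: assumes "psd 2 A" "psd 2 B" "0 < a" "a < 1"
  shows "\<exists>g\<ge>0. mtrace (tensor2 A B * sigma2 a) = of_real g \<and> (g = 0 \<longrightarrow> A$$(0,0) * B$$(0,0) = 0)"
proof -
  have AB: "A \<in> carrier_mat 2 2" "B \<in> carrier_mat 2 2" using assms by (auto simp: psd_def)
  obtain p q r s z w where h: "p \<ge> 0" "q \<ge> 0" "r \<ge> 0" "s \<ge> 0"
    "A$$(0,0) = of_real p" "A$$(1,1) = of_real q" "A$$(0,1) = z" "A$$(1,0) = cnj z"
    "B$$(0,0) = of_real r" "B$$(1,1) = of_real s" "B$$(0,1) = w" "B$$(1,0) = cnj w"
    "(cmod z)^2 \<le> p * q" "(cmod w)^2 \<le> r * s" "\<bar>Re (z * w)\<bar> \<le> cmod z * cmod w"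
    using term_gen[OF assms(1,2)] by blast
  define t where "t = Re (z * w)"
  have ht: "\<bar>t\<bar> \<le> cmod z * cmod w" using h(15) by (simp add: t_def)
  define g where "g = a/2 * (p*r + q*s - 2*t) + (1 - a) * (q * r)"
  have e: "of_real p * of_real r - z * w - cnj z * cnj w + of_real q * of_real s
      = complex_of_real (p*r + q*s - 2 * t)"
    using cnj_sum[of z w] unfolding t_def by (simp add: algebra_simps)
  have tr: "mtrace (tensor2 A B * sigma2 a) = of_real g"
    unfolding tr_sigma2[OF AB] h g_def e by (simp add: algebra_simps)
  have "2 * \<bar>t\<bar> \<le> p * r + q * s" by (rule core_real[where x = "cmod z" and y = "cmod w"]) (use h ht in auto)
  then have "0 \<le> p*r + q*s - 2*t" by linarith
  then have g0: "g \<ge> 0" unfolding g_def using h assms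
    by (intro add_nonneg_nonneg mult_nonneg_nonneg) auto
  have "g = 0 \<longrightarrow> p * r = 0"
    using real_zero2[where x = "cmod z" and y = "cmod w" and t = t, of p q r s a] h ht assms
    unfolding g_def by auto
  then show ?thesis using tr g0 h by (intro exI[of _ g]) auto
qed



lemma mtrace_plus: assumes "X \<in> carrier_mat n n" "Y \<in> carrier_mat n n"
  shows "mtrace (X + Y) = mtrace X + mtrace Y"
proof -
  have "(\<Sum>i<dim_row (X + Y). (X+Y)$$(i,i)) = (\<Sum>i<n. X$$(i,i) + Y$$(i,i))"
    using assms by (intro sum.cong) auto
  also have "\<dots> = (\<Sum>i<n. X$$(i,i)) + (\<Sum>i<n. Y$$(i,i))" by (rule sum.distrib)
  finally show ?thesis unfolding mtrace_def using assms by simp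
qed

lemma mtrace_smult: assumes "X \<in> carrier_mat n n" shows "mtrace (c \<cdot>\<^sub>m X) = c * mtrace X"
proof -
  have "(\<Sum>i<dim_row (c \<cdot>\<^sub>m X). (c \<cdot>\<^sub>m X)$$(i,i)) = (\<Sum>i<n. c * X$$(i,i))"
    using assms by (intro sum.cong) auto
  also have "\<dots> = c * (\<Sum>i<n. X$$(i,i))" by (rule sum_distrib_left[symmetric])
  finally show ?thesis unfolding mtrace_def using assms by simp
qed

lemma mtrace_zero: "S \<in> carrier_mat n n \<Longrightarrow> mtrace (0\<^sub>m n n * S) = 0"
  unfolding mtrace_def by (auto intro!: sum.neutral)

lemma mtrace_zero0: "mtrace (0\<^sub>m n n) = 0"
  unfolding mtrace_def by (auto intro!: sum.neutral)

lemma smult_one_mat: "(1::complex) \<cdot>\<^sub>m M = M"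
  by (rule eq_matI) auto

definition Fsep :: "real \<times> complex mat \<times> complex mat \<Rightarrow> complex mat" where
  "Fsep = (\<lambda>(c, A, B). complex_of_real c \<cdot>\<^sub>m tensor2 A B)"

lemma Fsep_carrier: "msum 4 (map Fsep cs) \<in> carrier_mat 4 4"
  by (rule msum_carrier) (auto simp: Fsep_def)

lemma sep_zero:
  assumes S: "S \<in> carrier_mat 4 4"
    and T: "\<And>A B. psd 2 A \<Longrightarrow> psd 2 B \<Longrightarrow> (\<exists>g\<ge>0. mtrace (tensor2 A B * S) = of_real g \<and> (g = 0 \<longrightarrow> A$$(0,0)*B$$(0,0) = 0))"
    and cs: "\<forall>(c,A,B)\<in>set cs. c \<ge> 0 \<and> psd 2 A \<and> psd 2 B"
  shows "\<exists>r\<ge>0. mtrace (msum 4 (map Fsep cs) * S) = of_real r \<and> (r = 0 \<longrightarrow> msum 4 (map Fsep cs) $$ (0,0) = 0)"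
  using cs
proof (induction cs)
  case Nil
  then show ?case using S by (auto simp: mtrace_zero0 intro!: exI[of _ 0])
next
  case (Cons x cs)
  obtain c A B where x: "x = (c, A, B)" by (cases x) auto
  have h: "c \<ge> 0" "psd 2 A" "psd 2 B" using Cons(2) x by auto
  obtain r where r: "r \<ge> 0" "mtrace (msum 4 (map Fsep cs) * S) = of_real r" "r = 0 \<longrightarrow> msum 4 (map Fsep cs) $$ (0,0) = 0"
    using Cons by auto
  obtain g where g: "g \<ge> 0" "mtrace (tensor2 A B * S) = of_real g" "g = 0 \<longrightarrow> A$$(0,0)*B$$(0,0) = 0"
    using T[OF h(2,3)] by auto
  have Fx: "Fsep x = complex_of_real c \<cdot>\<^sub>m tensor2 A B" by (simp add: Fsep_def x)
  have C: "msum 4 (map Fsep cs) \<in> carrier_mat 4 4" by (rule Fsep_carrier)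
  have "mtrace (msum 4 (map Fsep (x # cs)) * S) = mtrace ((complex_of_real c \<cdot>\<^sub>m tensor2 A B) * S + msum 4 (map Fsep cs) * S)"
    using C S Fx by (simp add: add_mult_distrib_mat[of _ 4 4 _ _ 4])
  also have "\<dots> = mtrace ((complex_of_real c \<cdot>\<^sub>m tensor2 A B) * S) + mtrace (msum 4 (map Fsep cs) * S)"
    using C S by (intro mtrace_plus) auto
  also have "(complex_of_real c \<cdot>\<^sub>m tensor2 A B) * S = complex_of_real c \<cdot>\<^sub>m (tensor2 A B * S)"
    using S by (intro mult_smult_assoc_mat) auto
  also have "mtrace \<dots> = complex_of_real c * of_real g" by (subst mtrace_smult[of _ 4]) (use g S in auto)
  finally have tr: "mtrace (msum 4 (map Fsep (x # cs)) * S) = of_real (c * g + r)" using r by simp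
  have e00: "msum 4 (map Fsep (x # cs)) $$ (0,0) = of_real c * (A$$(0,0)*B$$(0,0)) + msum 4 (map Fsep cs) $$ (0,0)"
    using C Fx by (simp add: tensor2_index)
  have "c * g + r = 0 \<longrightarrow> msum 4 (map Fsep (x # cs)) $$ (0,0) = 0"
  proof
    assume "c * g + r = 0"
    moreover have "c * g \<ge> 0" using h g by simp
    ultimately have "c * g = 0" "r = 0" using r by linarith+
    then show "msum 4 (map Fsep (x # cs)) $$ (0,0) = 0" using e00 r g by auto
  qed
  then show ?case using tr h g r by (intro exI[of _ "c * g + r"]) auto
qed

lemma sep_entry0:
  assumes "separable_op P" "S \<in> carrier_mat 4 4" "mtrace (P * S) = 0"
    and T: "\<And>A B. psd 2 A \<Longrightarrow> psd 2 B \<Longrightarrow> (\<exists>g\<ge>0. mtrace (tensor2 A B * S) = of_real g \<and> (g = 0 \<longrightarrow> A$$(0,0)*B$$(0,0) = 0))"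
  shows "P $$ (0,0) = 0" "P \<in> carrier_mat 4 4"
proof -
  obtain cs where cs: "\<forall>(c,A,B)\<in>set cs. c \<ge> 0 \<and> psd 2 A \<and> psd 2 B" and P: "P = msum 4 (map Fsep cs)"
    using assms(1) unfolding separable_op_def Fsep_def by blast
  obtain r where "r \<ge> 0" "mtrace (P * S) = of_real r" "r = 0 \<longrightarrow> P $$ (0,0) = 0"
    using sep_zero[OF assms(2) T cs] P by blast
  then show "P $$ (0,0) = 0" using assms(3) by simp
  show "P \<in> carrier_mat 4 4" using P Fsep_carrier by simp
qed

theorem part3:
  assumes "0 < \<alpha>" "\<alpha> < 1" "0 < \<beta>" "\<beta> < 1"
  shows "\<not> sep_distinguishable [sigma1 \<alpha>, sigma2 \<beta>]"
proof
  assume "sep_distinguishable [sigma1 \<alpha>, sigma2 \<beta>]"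
  then obtain Pm where sep': "\<forall>i < length [sigma1 \<alpha>, sigma2 \<beta>]. separable_op (Pm i)"
    and sum': "msum 4 (map Pm [0..<length [sigma1 \<alpha>, sigma2 \<beta>]]) = 1\<^sub>m 4"
    and tr': "\<forall>i < length [sigma1 \<alpha>, sigma2 \<beta>]. \<forall>j < length [sigma1 \<alpha>, sigma2 \<beta>]. mtrace (Pm i * [sigma1 \<alpha>, sigma2 \<beta>] ! j) = (if i = j then 1 else 0)"
    unfolding sep_distinguishable_def by blast
  have l2: "length [sigma1 \<alpha>, sigma2 \<beta>] = 2" by simp
  have sep: "\<forall>i < 2. separable_op (Pm i)" using sep' unfolding l2 .
  have sum: "msum 4 (map Pm [0..<2]) = 1\<^sub>m 4" using sum' unfolding l2 .
  have tr: "\<forall>i < 2. \<forall>j < 2. mtrace (Pm i * [sigma1 \<alpha>, sigma2 \<beta>] ! j) = (if i = j then 1 else 0)"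
    using tr' unfolding l2 .
  have t1: "mtrace (Pm 1 * sigma1 \<alpha>) = 0" using tr[rule_format, of 1 0] by simp
  have t0: "mtrace (Pm 0 * sigma2 \<beta>) = 0" using tr[rule_format, of 0 1] by simp
  have P1: "Pm 1 $$ (0,0) = 0" "Pm 1 \<in> carrier_mat 4 4"
    using sep_entry0[OF _ sigma1_carrier t1 term1[OF _ _ assms(1,2)]] sep by auto
  have P0: "Pm 0 $$ (0,0) = 0" "Pm 0 \<in> carrier_mat 4 4"
    using sep_entry0[OF _ sigma2_carrier t0 term2[OF _ _ assms(3,4)]] sep by auto
  have "[0..<2] = [0, 1::nat]" by (simp add: upt_rec)
  then have "Pm 0 + (Pm 1 + 0\<^sub>m 4 4) = 1\<^sub>m 4" using sum by simp
  moreover have "Pm 1 + 0\<^sub>m 4 4 = Pm 1" using P1(2) by (rule right_add_zero_mat)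
  ultimately have s1: "Pm 0 + Pm 1 = 1\<^sub>m 4" by simp
  have "(Pm 0 + Pm 1) $$ (0,0) = Pm 0 $$ (0,0) + Pm 1 $$ (0,0)"
    using P1(2) by (intro index_add_mat(1)) auto
  also have "\<dots> = 0" using P0(1) P1(1) by simp
  finally have "(1\<^sub>m 4 :: complex mat) $$ (0,0) = 0" using s1 by simp
  then show False by simp
qed



lemma adjK_carrier[simp]: "K \<in> carrier_mat n n \<Longrightarrow> mat_adjoint K * (K :: complex mat) \<in> carrier_mat n n"
  by (rule mult_carrier_mat[of _ n n]) auto

lemma cnj_mult_nonneg: "0 \<le> cnj u * (u::complex)"
  using complex_mult_cnj[of u] by (simp add: mult.commute less_eq_complex_def)

lemma psd_adj: assumes X: "X \<in> carrier_mat 2 2" shows "psd 2 (mat_adjoint X * X)"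
  unfolding psd_def
proof (intro conjI ballI)
  show "mat_adjoint X * X \<in> carrier_mat 2 2" using X by auto
  fix v :: "complex vec" assume v: "v \<in> carrier_vec 2"
  have "conjugate v \<bullet> ((mat_adjoint X * X) *\<^sub>v v)
    = cnj (X$$(0,0) * v$0 + X$$(0,1) * v$1) * (X$$(0,0) * v$0 + X$$(0,1) * v$1)
    + cnj (X$$(1,0) * v$0 + X$$(1,1) * v$1) * (X$$(1,0) * v$0 + X$$(1,1) * v$1)"
    using X v by (simp add: scalar_prod_def mult_mat_vec_def index_mult_mat sum2' algebra_simps)
  also have "0 \<le> \<dots>" by (intro add_nonneg_nonneg cnj_mult_nonneg)
  finally show "0 \<le> conjugate v \<bullet> ((mat_adjoint X * X) *\<^sub>v v)" .
qed

lemma gK_prod: assumes "prodform K"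
  shows "\<exists>A B. psd 2 A \<and> psd 2 B \<and> gK (K, l) = tensor2 A B"
proof -
  obtain X Y where X: "X \<in> carrier_mat 2 2" and Y: "Y \<in> carrier_mat 2 2" and K: "K = tensor2 X Y"
    using assms unfolding prodform_def by blast
  have "gK (K, l) = tensor2 (mat_adjoint X * X) (mat_adjoint Y * Y)"
    unfolding gK_def K using X Y by (simp add: tensor2_adj tensor2_mult)
  then show ?thesis using psd_adj[OF X] psd_adj[OF Y] by blast
qed

lemma prod_sep: "\<forall>(K,l)\<in>set xs. prodform K \<Longrightarrow> separable_op (msum 4 (map gK xs))"
proof (induction xs)
  case Nil
  then show ?case unfolding separable_op_def by (intro exI[of _ "[]"]) simp
next
  case (Cons x xs)
  obtain K l where x: "x = (K, l)" by (cases x) auto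
  obtain A B where AB: "psd 2 A" "psd 2 B" "gK (K, l) = tensor2 A B"
    using gK_prod[of K l] Cons(2) x by auto
  obtain cs where cs: "\<forall>(c, A, B)\<in>set cs. 0 \<le> c \<and> psd 2 A \<and> psd 2 B"
    "msum 4 (map gK xs) = msum 4 (map (\<lambda>(c, A, B). complex_of_real c \<cdot>\<^sub>m tensor2 A B) cs)"
    using Cons unfolding separable_op_def by auto
  show ?case unfolding separable_op_def
    by (intro exI[of _ "(1, A, B) # cs"]) (use AB cs x in \<open>simp add: smult_one_mat\<close>)
qed

lemma partition2:
  "\<forall>(K,l)\<in>set xs. l < 2 \<and> K \<in> carrier_mat 4 4 \<Longrightarrow>
   msum 4 (map gK xs) = msum 4 (map gK (filter (\<lambda>(K,l). l = 0) xs)) + msum 4 (map gK (filter (\<lambda>(K,l). l = 1) xs))"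
proof (induction xs)
  case Nil
  then show ?case by simp
next
  case (Cons x xs)
  obtain K l where x: "x = (K, l)" by (cases x) auto
  have Kc: "K \<in> carrier_mat 4 4" "l < 2" using Cons(2) x by auto
  have g: "gK (K, l) \<in> carrier_mat 4 4" using Kc by (simp add: gK_def)
  let ?M0 = "msum 4 (map gK (filter (\<lambda>(K,l). l = 0) xs))"
  let ?M1 = "msum 4 (map gK (filter (\<lambda>(K,l). l = 1) xs))"
  have c0: "?M0 \<in> carrier_mat 4 4" using Cons(2) by (intro msum_carrier) (auto simp: gK_def)
  have c1: "?M1 \<in> carrier_mat 4 4" using Cons(2) by (intro msum_carrier) (auto simp: gK_def)
  have IH: "msum 4 (map gK xs) = ?M0 + ?M1" using Cons by auto
  show ?case
  proof (cases "l = 0")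
    case True
    then show ?thesis using IH x g c0 c1 by (simp add: assoc_add_mat)
  next
    case False
    then have l1: "l = 1" using Kc by auto
    have "gK (K,l) + (?M0 + ?M1) = (gK (K,l) + ?M0) + ?M1" using g c0 c1 by (simp add: assoc_add_mat)
    also have "gK (K,l) + ?M0 = ?M0 + gK (K,l)" using g c0 by (rule comm_add_mat)
    also have "(?M0 + gK (K,l)) + ?M1 = ?M0 + (gK (K,l) + ?M1)" using g c0 c1 by (simp add: assoc_add_mat)
    finally show ?thesis using IH x l1 by simp
  qed
qed

lemma povm_gK: "povm_elem L i = msum 4 (map gK (filter (\<lambda>(K,l). l = i) L))"
  unfolding povm_elem_def gK_def ..

lemma locc_sep: assumes "length \<rho>s = 2" "locc_distinguishable \<rho>s"
  shows "sep_distinguishable \<rho>s"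
proof -
  obtain L where L: "locc_tree L" "\<forall>(K, l) \<in> set L. l < length \<rho>s"
    and tr: "\<forall>i < length \<rho>s. \<forall>j < length \<rho>s. mtrace (povm_elem L i * \<rho>s ! j) = (if i = j then 1 else 0)"
    using assms(2) unfolding locc_distinguishable_def by blast
  have tp: "msum 4 (map gK L) = 1\<^sub>m 4" "\<forall>(K,l)\<in>set L. prodform K" using tree_props[OF L(1)] by auto
  have sep: "\<forall>i < length \<rho>s. separable_op (povm_elem L i)"
    unfolding povm_gK using tp(2) by (auto intro!: prod_sep)
  have cK: "\<forall>(K,l)\<in>set L. l < 2 \<and> K \<in> carrier_mat 4 4" using tp(2) L(2) assms(1)
    by (auto simp: prodform_def)
  have c1: "povm_elem L 1 \<in> carrier_mat 4 4" unfolding povm_gK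
    using cK by (intro msum_carrier) (auto simp: gK_def)
  have "[0..<length \<rho>s] = [0, 1::nat]" using assms(1) by (simp add: upt_rec)
  then have "msum 4 (map (povm_elem L) [0..<length \<rho>s]) = povm_elem L 0 + (povm_elem L 1 + 0\<^sub>m 4 4)" by simp
  also have "povm_elem L 1 + 0\<^sub>m 4 4 = povm_elem L 1" using c1 by (rule right_add_zero_mat)
  also have "povm_elem L 0 + povm_elem L 1 = msum 4 (map gK L)"
    unfolding povm_gK using partition2[OF cK] by simp
  finally have s: "msum 4 (map (povm_elem L) [0..<length \<rho>s]) = 1\<^sub>m 4" using tp(1) by simp
  show ?thesis unfolding sep_distinguishable_def using sep s tr by blast
qed



definition vv :: "complex \<Rightarrow> complex \<Rightarrow> nat \<Rightarrow> complex" where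
  "vv x y i = (if i = 0 then x else y)"

definition projv :: "complex \<Rightarrow> complex \<Rightarrow> complex mat" where
  "projv x y = mat 2 2 (\<lambda>(i,j). vv x y i * cnj (vv x y j) / (x * cnj x + y * cnj y))"

lemma projv_carrier[simp]: "projv x y \<in> carrier_mat 2 2" by (simp add: projv_def)
lemma projv_dims[simp]: "dim_row (projv x y) = 2" "dim_col (projv x y) = 2" by (simp_all add: projv_def)
lemma projv_idx: "i < 2 \<Longrightarrow> j < 2 \<Longrightarrow> projv x y $$ (i,j) = vv x y i * cnj (vv x y j) / (x * cnj x + y * cnj y)"
  by (simp add: projv_def)

lemma normsq_nz: assumes "x \<noteq> 0 \<or> y \<noteq> 0" shows "x * cnj x + y * cnj y \<noteq> 0"
proof -
  have "x * cnj x + y * cnj y = complex_of_real ((cmod x)^2 + (cmod y)^2)"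
    unfolding of_real_add complex_norm_square by simp
  moreover have "(cmod x)^2 + (cmod y)^2 > 0" using assms
    by (auto simp: add_pos_nonneg add_nonneg_pos)
  ultimately show ?thesis by (metis of_real_eq_0_iff order_less_irrefl)
qed

lemma cnj_N: "cnj (x * cnj x + y * cnj y) = x * cnj x + y * cnj y"
  by (simp add: mult.commute)

lemma projv_idem: assumes "x \<noteq> 0 \<or> y \<noteq> 0"
  shows "mat_adjoint (projv x y) * projv x y = projv x y"
proof (rule eq_matI)
  fix i j assume ij: "i < dim_row (projv x y)" "j < dim_col (projv x y)"
  then have ij2: "i < 2" "j < 2" by (auto simp: projv_def)
  define N where "N = x * cnj x + y * cnj y"
  have N: "N \<noteq> 0" using normsq_nz[OF assms] by (simp add: N_def)
  have cN: "cnj N = N" using cnj_N by (simp add: N_def)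
  have "(mat_adjoint (projv x y) * projv x y) $$ (i,j) = (\<Sum>k<2. cnj (projv x y $$ (k,i)) * projv x y $$ (k,j))"
    using ij2 by (simp add: index_mult_mat scalar_prod_def atLeast0LessThan)
  also have "\<dots> = (\<Sum>k<2. cnj (vv x y k * cnj (vv x y i) / N) * (vv x y k * cnj (vv x y j) / N))"
    using ij2 by (intro sum.cong) (auto simp: projv_idx N_def)
  also have "\<dots> = vv x y i * cnj (vv x y j) * ((x * cnj x + y * cnj y) / (N * N))"
    unfolding sum2 using cN by (simp add: vv_def field_simps; simp add: add_divide_distrib)
  also have "\<dots> = projv x y $$ (i,j)" using ij2 N by (simp add: projv_idx N_def[symmetric])
  finally show "(mat_adjoint (projv x y) * projv x y) $$ (i,j) = projv x y $$ (i,j)" .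
qed (auto simp: projv_def)

lemma projv_perp_sum: assumes "x \<noteq> 0 \<or> y \<noteq> 0"
  shows "projv x y + projv (- cnj y) (cnj x) = 1\<^sub>m 2"
proof (rule eq_matI)
  fix i j assume ij: "i < dim_row (1\<^sub>m 2 :: complex mat)" "j < dim_col (1\<^sub>m 2 :: complex mat)"
  then have ij2: "i < 2" "j < 2" by auto
  define N where "N = x * cnj x + y * cnj y"
  have N: "N \<noteq> 0" using normsq_nz[OF assms] by (simp add: N_def)
  have e: "- cnj y * cnj (- cnj y) + cnj x * cnj (cnj x) = N" by (simp add: algebra_simps N_def)
  have "(projv x y + projv (- cnj y) (cnj x)) $$ (i, j) = projv x y $$ (i,j) + projv (- cnj y) (cnj x) $$ (i, j)"
    using ij2 by simp
  also have "\<dots> = (vv x y i * cnj (vv x y j) + vv (- cnj y) (cnj x) i * cnj (vv (- cnj y) (cnj x) j)) / N"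
    using ij2 unfolding projv_idx[OF ij2] e N_def[symmetric] by (simp add: add_divide_distrib)
  also have "vv x y i * cnj (vv x y j) + vv (- cnj y) (cnj x) i * cnj (vv (- cnj y) (cnj x) j) = N * 1\<^sub>m 2 $$ (i, j)"
    using ij2 unfolding less2 by (auto simp: vv_def N_def algebra_simps)
  also have "N * 1\<^sub>m 2 $$ (i, j) / N = 1\<^sub>m 2 $$ (i, j)" using N by simp
  finally show "(projv x y + projv (- cnj y) (cnj x)) $$ (i, j) = 1\<^sub>m 2 $$ (i, j)" .
qed auto

lemma proj_complete: assumes "x \<noteq> 0 \<or> y \<noteq> 0"
  shows "msum 2 (map (\<lambda>A. mat_adjoint A * A) [projv x y, projv (- cnj y) (cnj x)]) = 1\<^sub>m 2"
proof -
  have a2: "- cnj y \<noteq> 0 \<or> cnj x \<noteq> 0" using assms by auto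
  show ?thesis using projv_idem[OF assms] projv_idem[OF a2] projv_perp_sum[OF assms] by simp
qed



lemma walgate_exists: "\<exists>u0 u1. (u0 \<noteq> 0 \<or> u1 \<noteq> 0) \<and> u0 * cnj u0 * k - u1 * cnj u1 * k + u1 * cnj u0 * w = 0"
proof (cases "k = 0")
  case True
  then show ?thesis by (intro exI[of _ 1] exI[of _ 0]) simp
next
  case k: False
  show ?thesis
  proof (cases "w = 0")
    case True
    then show ?thesis by (intro exI[of _ 1] exI[of _ 1]) simp
  next
    case w: False
    define m where "m = (cmod k)^2 / (cmod w)^2"
    have m0: "m \<ge> 0" by (simp add: m_def)
    define S where "S = sqrt (1 + 4 * m)"
    have S2: "S^2 = 1 + 4 * m" using m0 by (simp add: S_def)
    define x where "x = (S - 1) / 2"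
    have xm: "x^2 + x = m" unfolding x_def using S2 by (simp add: power2_eq_square field_simps)
    have kk: "k / w * cnj (k / w) = complex_of_real m"
    proof -
      have "k / w * cnj (k / w) = complex_of_real ((cmod (k / w))^2)" by (rule complex_norm_square[symmetric])
      also have "(cmod (k / w))^2 = m" by (simp add: m_def norm_divide power_divide)
      finally show ?thesis .
    qed
    have "complex_of_real x * cnj (complex_of_real x) * k - k / w * cnj (k / w) * k + k / w * cnj (complex_of_real x) * w
        = k * complex_of_real (x^2 + x - m)"
      unfolding kk using w by (simp add: algebra_simps power2_eq_square)
    also have "\<dots> = 0" using xm by simp
    finally show ?thesis using k w by (intro exI[of _ "complex_of_real x"] exI[of _ "k / w"]) simp
  qed
qed

definition ee0 :: "complex \<Rightarrow> complex \<Rightarrow> complex vec \<Rightarrow> complex" where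
  "ee0 a0 a1 v = cnj a0 * v$0 + cnj a1 * v$2"
definition ee1 :: "complex \<Rightarrow> complex \<Rightarrow> complex vec \<Rightarrow> complex" where
  "ee1 a0 a1 v = cnj a0 * v$1 + cnj a1 * v$3"

lemma leaf_zero: assumes v: "v \<in> carrier_vec 4" and B: "B \<in> carrier_mat 2 2"
  and h0: "B$$(0,0) * ee0 u0 u1 v + B$$(0,1) * ee1 u0 u1 v = 0"
  and h1: "B$$(1,0) * ee0 u0 u1 v + B$$(1,1) * ee1 u0 u1 v = 0"
  shows "tensor2 (projv u0 u1) B *\<^sub>v v = 0\<^sub>v 4"
proof (rule eq_vecI)
  fix i assume "i < dim_vec (0\<^sub>v 4 :: complex vec)"
  then have i: "i < 4" by simp
  define N where "N = u0 * cnj u0 + u1 * cnj u1"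
  have e: "(tensor2 (projv u0 u1) B *\<^sub>v v) $ i = vv u0 u1 (i div 2) / N *
      (B$$(i mod 2, 0) * ee0 u0 u1 v + B$$(i mod 2, 1) * ee1 u0 u1 v)"
    using i v B unfolding less4
    by (auto simp: mult_mat_vec_def scalar_prod_def sum4' tensor2_index projv_idx vv_def ee0_def ee1_def N_def
        divide_inverse algebra_simps)
  have "i mod 2 = 0 \<or> i mod 2 = 1" by auto
  then show "(tensor2 (projv u0 u1) B *\<^sub>v v) $ i = 0\<^sub>v 4 $ i"
    using e h0 h1 i by auto
qed (use v in auto)



definition aliceL :: "complex mat list \<Rightarrow> (complex mat \<times> nat) list list \<Rightarrow> (complex mat \<times> nat) list" where
  "aliceL As Ls = concat (map (\<lambda>(A, L). map (\<lambda>(K, l). (K * tensor2 A (1\<^sub>m 2), l)) L) (zip As Ls))"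
definition bobL :: "complex mat list \<Rightarrow> (complex mat \<times> nat) list list \<Rightarrow> (complex mat \<times> nat) list" where
  "bobL Bs Ls = concat (map (\<lambda>(B, L). map (\<lambda>(K, l). (K * tensor2 (1\<^sub>m 2) B, l)) L) (zip Bs Ls))"

definition subT :: "complex \<Rightarrow> complex \<Rightarrow> (complex mat \<times> nat) list" where
  "subT e0 e1 = (if e0 = 0 \<and> e1 = 0 then [(1\<^sub>m 4, 0)]
     else bobL [projv e0 e1, projv (- cnj e1) (cnj e0)] [[(1\<^sub>m 4, 1)], [(1\<^sub>m 4, 0)]])"

lemma subT_tree: "locc_tree (subT e0 e1)"
proof (cases "e0 = 0 \<and> e1 = 0")
  case True
  then show ?thesis by (simp add: subT_def locc_tree.stop)
next
  case False
  then have ne: "e0 \<noteq> 0 \<or> e1 \<noteq> 0" by auto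
  show ?thesis unfolding subT_def bobL_def using False
    by (simp only: if_False) (rule locc_tree.bob, use proj_complete[OF ne] in \<open>auto intro: locc_tree.stop\<close>)
qed

definition goodL :: "complex vec \<Rightarrow> complex vec \<Rightarrow> (complex mat \<times> nat) list \<Rightarrow> bool" where
  "goodL v1 v2 L \<longleftrightarrow> (\<forall>(K,l)\<in>set L. K \<in> carrier_mat 4 4 \<and> l < 2 \<and> (l = 1 \<longrightarrow> K *\<^sub>v v1 = 0\<^sub>v 4) \<and> (l = 0 \<longrightarrow> K *\<^sub>v v2 = 0\<^sub>v 4))"

lemma K_simp: "B \<in> carrier_mat 2 2 \<Longrightarrow> A \<in> carrier_mat 2 2 \<Longrightarrow>
  1\<^sub>m 4 * tensor2 (1\<^sub>m 2) B * tensor2 A (1\<^sub>m 2) = tensor2 A B"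
  by (simp add: tensor2_mult)

lemma sub_good:
  assumes v1: "v1 \<in> carrier_vec 4" and v2: "v2 \<in> carrier_vec 4"
    and W: "cnj (ee0 a0 a1 v2) * ee0 a0 a1 v1 + cnj (ee1 a0 a1 v2) * ee1 a0 a1 v1 = 0"
  shows "goodL v1 v2 (map (\<lambda>(K, l). (K * tensor2 (projv a0 a1) (1\<^sub>m 2), l)) (subT (ee0 a0 a1 v2) (ee1 a0 a1 v2)))"
proof (cases "ee0 a0 a1 v2 = 0 \<and> ee1 a0 a1 v2 = 0")
  case True
  have "tensor2 (projv a0 a1) (1\<^sub>m 2) *\<^sub>v v2 = 0\<^sub>v 4"
    by (rule leaf_zero[OF v2]) (use True in auto)
  then show ?thesis using True by (simp add: subT_def goodL_def)
next
  case False
  define n0 where "n0 = ee0 a0 a1 v2"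
  define n1 where "n1 = ee1 a0 a1 v2"
  have F: "\<not> (n0 = 0 \<and> n1 = 0)" using False by (simp add: n0_def n1_def)
  have z1: "tensor2 (projv a0 a1) (projv n0 n1) *\<^sub>v v1 = 0\<^sub>v 4"
  proof (rule leaf_zero[OF v1])
    show "projv n0 n1 $$ (0, 0) * ee0 a0 a1 v1 + projv n0 n1 $$ (0, 1) * ee1 a0 a1 v1 = 0"
      using W unfolding n0_def[symmetric] n1_def[symmetric]
      by (simp add: projv_idx vv_def divide_inverse algebra_simps)
         (metis (no_types, lifting) distrib_left mult.assoc mult.commute mult_zero_right)
    show "projv n0 n1 $$ (1, 0) * ee0 a0 a1 v1 + projv n0 n1 $$ (1, 1) * ee1 a0 a1 v1 = 0"
      using W unfolding n0_def[symmetric] n1_def[symmetric]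
      by (simp add: projv_idx vv_def divide_inverse algebra_simps)
         (metis (no_types, lifting) distrib_left mult.assoc mult.commute mult_zero_right)
  qed simp
  have z2: "tensor2 (projv a0 a1) (projv (- cnj n1) (cnj n0)) *\<^sub>v v2 = 0\<^sub>v 4"
  proof (rule leaf_zero[OF v2])
    show "projv (- cnj n1) (cnj n0) $$ (0, 0) * ee0 a0 a1 v2 + projv (- cnj n1) (cnj n0) $$ (0, 1) * ee1 a0 a1 v2 = 0"
      unfolding n0_def[symmetric] n1_def[symmetric] by (simp add: projv_idx vv_def divide_inverse algebra_simps)
    show "projv (- cnj n1) (cnj n0) $$ (1, 0) * ee0 a0 a1 v2 + projv (- cnj n1) (cnj n0) $$ (1, 1) * ee1 a0 a1 v2 = 0"
      unfolding n0_def[symmetric] n1_def[symmetric] by (simp add: projv_idx vv_def divide_inverse algebra_simps)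
  qed simp
  have L: "map (\<lambda>(K, l). (K * tensor2 (projv a0 a1) (1\<^sub>m 2), l)) (subT n0 n1)
     = [(tensor2 (projv a0 a1) (projv n0 n1), 1), (tensor2 (projv a0 a1) (projv (- cnj n1) (cnj n0)), 0)]"
    using F by (simp add: subT_def bobL_def tensor2_mult)
  show ?thesis unfolding n0_def[symmetric] n1_def[symmetric] L goodL_def using z1 z2 by simp
qed



lemma s1_entries: "\<psi> \<in> s1 \<Longrightarrow> \<psi> $ 2 = 0 \<and> \<psi> $ 3 = \<psi> $ 0"
  unfolding s1_def by (auto simp: phi_plus_def ket_def)

lemma s2_entries: "\<psi> \<in> s2 \<Longrightarrow> \<psi> $ 1 = 0 \<and> \<psi> $ 3 = - \<psi> $ 0"
  unfolding s2_def by (auto simp: phi_minus_def ket_def)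

lemma W_expr:
  assumes "v1 $ 2 = 0" "v1 $ 3 = v1 $ 0" "v2 $ 1 = 0" "v2 $ 3 = - v2 $ 0"
  shows "cnj (ee0 a0 a1 v2) * ee0 a0 a1 v1 + cnj (ee1 a0 a1 v2) * ee1 a0 a1 v1
    = a0 * cnj a0 * (cnj (v2$0) * v1$0) - a1 * cnj a1 * (cnj (v2$0) * v1$0)
      + a1 * cnj a0 * (cnj (v2$2) * v1$0 - cnj (v2$0) * v1$1)"
  unfolding ee0_def ee1_def using assms by (simp add: algebra_simps)

lemma goodL_append: "goodL v1 v2 (xs @ ys) \<longleftrightarrow> goodL v1 v2 xs \<and> goodL v1 v2 ys"
  unfolding goodL_def by auto

lemma msum_gK_zero: "\<forall>(K,l)\<in>set xs. K \<in> carrier_mat 4 4 \<and> K *\<^sub>v v = 0\<^sub>v 4 \<Longrightarrow> v \<in> carrier_vec 4 \<Longrightarrow>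
  msum 4 (map gK xs) *\<^sub>v v = 0\<^sub>v 4"
proof (induction xs)
  case Nil
  then show ?case by (auto intro!: eq_vecI simp: scalar_prod_def)
next
  case (Cons x xs)
  obtain K l where x: "x = (K, l)" by (cases x) auto
  have K: "K \<in> carrier_mat 4 4" "K *\<^sub>v v = 0\<^sub>v 4" using Cons(2) x by auto
  have M: "msum 4 (map gK xs) \<in> carrier_mat 4 4" using Cons(2) by (intro msum_carrier) (auto simp: gK_def)
  have g: "gK (K,l) *\<^sub>v v = 0\<^sub>v 4"
  proof -
    have "gK (K,l) *\<^sub>v v = mat_adjoint K *\<^sub>v (K *\<^sub>v v)" unfolding gK_def
      using K Cons(3) by (simp add: assoc_mult_mat_vec[of _ 4 4 _ 4])
    also have "\<dots> = 0\<^sub>v 4" by (rule eq_vecI) (use K in \<open>auto simp: scalar_prod_def\<close>)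
    finally show ?thesis .
  qed
  have gc: "gK (K,l) \<in> carrier_mat 4 4" using K by (simp add: gK_def)
  have "msum 4 (map gK (x # xs)) *\<^sub>v v = (gK (K,l) + msum 4 (map gK xs)) *\<^sub>v v" using x by simp
  also have "\<dots> = gK (K,l) *\<^sub>v v + msum 4 (map gK xs) *\<^sub>v v"
    by (rule add_mult_distrib_mat_vec[OF gc M Cons(3)])
  finally have "msum 4 (map gK (x # xs)) *\<^sub>v v = gK (K,l) *\<^sub>v v + msum 4 (map gK xs) *\<^sub>v v" .
  then show ?case using g Cons by simp
qed

lemma tr_proj_zero: assumes M: "M \<in> carrier_mat 4 4" and v: "v \<in> carrier_vec 4" and z: "M *\<^sub>v v = 0\<^sub>v 4"
  shows "mtrace (M * proj v) = 0"
proof -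
  have pc: "proj v \<in> carrier_mat 4 4" by (simp add: proj_def)
  have r: "(\<Sum>k<4. M $$ (i,k) * v $ k) = 0" if i: "i < 4" for i
  proof -
    have "(M *\<^sub>v v) $ i = 0" using z i by simp
    then show ?thesis using M v i by (simp add: mult_mat_vec_def scalar_prod_def atLeast0LessThan)
  qed
  have "mtrace (M * proj v) = (\<Sum>i<4. \<Sum>k<4. M $$ (i,k) * proj v $$ (k,i))" by (rule mtrace_mult4[OF M pc])
  also have "\<dots> = (\<Sum>i<4. cnj (v $ i) * (\<Sum>k<4. M $$ (i,k) * v $ k))"
    by (intro sum.cong refl) (auto simp: proj_def sum_distrib_left algebra_simps intro!: sum.cong)
  also have "\<dots> = 0" using r by simp
  finally show ?thesis .
qed

lemma tr_proj_one: assumes "unit_state v" shows "mtrace (proj v) = 1"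
proof -
  have "mtrace (proj v) = (\<Sum>i<4. v $ i * cnj (v $ i))" by (simp add: mtrace_def proj_def)
  also have "\<dots> = (\<Sum>i<4. complex_of_real ((cmod (v $ i))^2))"
    by (intro sum.cong refl) (rule complex_norm_square[symmetric])
  also have "\<dots> = complex_of_real (\<Sum>i<4. (cmod (v $ i))^2)" by (simp only: of_real_sum)
  also have "\<dots> = 1" using assms by (simp add: unit_state_def)
  finally show ?thesis .
qed

theorem part1:
  assumes h1: "\<psi>1 \<in> s1" "unit_state \<psi>1" and h2: "\<psi>2 \<in> s2" "unit_state \<psi>2"
  shows "locc_distinguishable [proj \<psi>1, proj \<psi>2]"
proof -
  have v1: "\<psi>1 \<in> carrier_vec 4" and v2: "\<psi>2 \<in> carrier_vec 4" using h1 h2 by (auto simp: unit_state_def)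
  note e1 = s1_entries[OF h1(1)] and e2 = s2_entries[OF h2(1)]
  obtain u0 u1 where u: "u0 \<noteq> 0 \<or> u1 \<noteq> 0"
    and W: "u0 * cnj u0 * (cnj (\<psi>2$0) * \<psi>1$0) - u1 * cnj u1 * (cnj (\<psi>2$0) * \<psi>1$0)
      + u1 * cnj u0 * (cnj (\<psi>2$2) * \<psi>1$0 - cnj (\<psi>2$0) * \<psi>1$1) = 0"
    using walgate_exists by blast
  have Wu: "cnj (ee0 u0 u1 \<psi>2) * ee0 u0 u1 \<psi>1 + cnj (ee1 u0 u1 \<psi>2) * ee1 u0 u1 \<psi>1 = 0"
    using W W_expr[of \<psi>1 \<psi>2 u0 u1] e1 e2 by simp
  have Wp: "cnj (ee0 (- cnj u1) (cnj u0) \<psi>2) * ee0 (- cnj u1) (cnj u0) \<psi>1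
          + cnj (ee1 (- cnj u1) (cnj u0) \<psi>2) * ee1 (- cnj u1) (cnj u0) \<psi>1 = 0"
  proof -
    have "cnj (ee0 (- cnj u1) (cnj u0) \<psi>2) * ee0 (- cnj u1) (cnj u0) \<psi>1
          + cnj (ee1 (- cnj u1) (cnj u0) \<psi>2) * ee1 (- cnj u1) (cnj u0) \<psi>1
        = - (u0 * cnj u0 * (cnj (\<psi>2$0) * \<psi>1$0) - u1 * cnj u1 * (cnj (\<psi>2$0) * \<psi>1$0)
      + u1 * cnj u0 * (cnj (\<psi>2$2) * \<psi>1$0 - cnj (\<psi>2$0) * \<psi>1$1))"
      using W_expr[of \<psi>1 \<psi>2 "- cnj u1" "cnj u0"] e1 e2 by (simp add: algebra_simps)
    also have "\<dots> = 0" unfolding W by simp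
    finally show ?thesis .
  qed
  define L1 where "L1 = subT (ee0 u0 u1 \<psi>2) (ee1 u0 u1 \<psi>2)"
  define L2 where "L2 = subT (ee0 (- cnj u1) (cnj u0) \<psi>2) (ee1 (- cnj u1) (cnj u0) \<psi>2)"
  define L where "L = aliceL [projv u0 u1, projv (- cnj u1) (cnj u0)] [L1, L2]"
  have tree: "locc_tree L" unfolding L_def aliceL_def
    by (rule locc_tree.alice) (use proj_complete[OF u] in \<open>auto simp: L1_def L2_def intro: subT_tree\<close>)
  have good: "goodL \<psi>1 \<psi>2 L"
    unfolding L_def aliceL_def using sub_good[OF v1 v2 Wu] sub_good[OF v1 v2 Wp]
    by (simp add: goodL_append L1_def L2_def)
  have cK: "\<forall>(K,l)\<in>set L. l < 2 \<and> K \<in> carrier_mat 4 4" using good unfolding goodL_def by auto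
  have P1z: "povm_elem L 1 *\<^sub>v \<psi>1 = 0\<^sub>v 4" unfolding povm_gK
    by (rule msum_gK_zero[OF _ v1]) (use good in \<open>auto simp: goodL_def\<close>)
  have P0z: "povm_elem L 0 *\<^sub>v \<psi>2 = 0\<^sub>v 4" unfolding povm_gK
    by (rule msum_gK_zero[OF _ v2]) (use good in \<open>auto simp: goodL_def\<close>)
  have c0: "povm_elem L 0 \<in> carrier_mat 4 4" unfolding povm_gK
    using cK by (intro msum_carrier) (auto simp: gK_def)
  have c1: "povm_elem L 1 \<in> carrier_mat 4 4" unfolding povm_gK
    using cK by (intro msum_carrier) (auto simp: gK_def)
  have sum1: "povm_elem L 0 + povm_elem L 1 = 1\<^sub>m 4"
    unfolding povm_gK using partition2[OF cK] tree_props[OF tree] by simp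
  have trsum: "mtrace (povm_elem L 0 * proj v) + mtrace (povm_elem L 1 * proj v) = 1" if "unit_state v" for v
  proof -
    have pc: "proj v \<in> carrier_mat 4 4" by (simp add: proj_def)
    have "mtrace (povm_elem L 0 * proj v) + mtrace (povm_elem L 1 * proj v)
        = mtrace (povm_elem L 0 * proj v + povm_elem L 1 * proj v)"
      using c0 c1 pc by (intro mtrace_plus[symmetric]) auto
    also have "povm_elem L 0 * proj v + povm_elem L 1 * proj v = (povm_elem L 0 + povm_elem L 1) * proj v"
      using c0 c1 pc by (simp add: add_mult_distrib_mat[of _ 4 4 _ _ 4])
    also have "\<dots> = proj v" using sum1 pc by simp
    finally show ?thesis using tr_proj_one[OF that] by simp
  qed
  have t10: "mtrace (povm_elem L 1 * proj \<psi>1) = 0" by (rule tr_proj_zero[OF c1 v1 P1z])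
  have t01: "mtrace (povm_elem L 0 * proj \<psi>2) = 0" by (rule tr_proj_zero[OF c0 v2 P0z])
  have t00: "mtrace (povm_elem L 0 * proj \<psi>1) = 1" using trsum[OF h1(2)] t10 by simp
  have t11: "mtrace (povm_elem L 1 * proj \<psi>2) = 1" using trsum[OF h2(2)] t01 by simp
  have tr: "\<forall>i < length [proj \<psi>1, proj \<psi>2]. \<forall>j < length [proj \<psi>1, proj \<psi>2].
      mtrace (povm_elem L i * [proj \<psi>1, proj \<psi>2] ! j) = (if i = j then 1 else 0)"
  proof (intro allI impI)
    fix i j assume "i < length [proj \<psi>1, proj \<psi>2]" "j < length [proj \<psi>1, proj \<psi>2]"
    then have "i = 0 \<or> i = 1" "j = 0 \<or> j = 1" by auto
    then show "mtrace (povm_elem L i * [proj \<psi>1, proj \<psi>2] ! j) = (if i = j then 1 else 0)"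
      using t10 t01 t00 t11 by auto
  qed
  show ?thesis unfolding locc_distinguishable_def
    using tree cK tr by (intro exI[of _ L]) auto
qed


theorem mainTheorem5:
  fixes \<alpha> \<beta> :: real
  assumes "0 < \<alpha>" "\<alpha> < 1" "0 < \<beta>" "\<beta> < 1"
  shows "(\<forall>\<psi>1 \<psi>2. \<psi>1 \<in> s1 \<and> unit_state \<psi>1 \<and> \<psi>2 \<in> s2 \<and> unit_state \<psi>2 \<longrightarrow>
            locc_distinguishable [proj \<psi>1, proj \<psi>2])
         \<and> \<not> locc_distinguishable [sigma1 \<alpha>, sigma2 \<beta>]
         \<and> \<not> sep_distinguishable [sigma1 \<alpha>, sigma2 \<beta>]"
proof (intro conjI allI impI)
  fix \<psi>1 \<psi>2 assume "\<psi>1 \<in> s1 \<and> unit_state \<psi>1 \<and> \<psi>2 \<in> s2 \<and> unit_state \<psi>2"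
  then show "locc_distinguishable [proj \<psi>1, proj \<psi>2]" using part1 by blast
next
  show "\<not> sep_distinguishable [sigma1 \<alpha>, sigma2 \<beta>]" by (rule part3[OF assms])
  then show "\<not> locc_distinguishable [sigma1 \<alpha>, sigma2 \<beta>]" using locc_sep[of "[sigma1 \<alpha>, sigma2 \<beta>]"] by auto
qed

end
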